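(* Let $[x^{(1)}_k]$ and $[x^{(2)}_k]$ be two zero-mean nonsingular Gaussian Markov sequences over $[0,N]$ that share the same reciprocal model. Then they share the same Markov model if and only if $(R^0_N)^{(1)}=(R^0_N)^{(2)}$, where $(R^0_N)^{(i)}$ is the coefficient $R^0_N$ of the (first-type) reciprocal boundary condition of the $i$-th sequence; equivalently, if and only if $M^{(1)}_N=M^{(2)}_N$.
   Context: $[0,N]=(0,1,\ldots,N)$; $x=[x_0',\ldots,x_N']'$, $C=\mathrm{Cov}(x)$, $'$ denotes transpose; $A_k$ denotes the $(k,k)$ block and $B_k$ the $(k,k+1)$ block of $C^{-1}$. Markov model: a zero-mean nonsingular Gaussian Markov sequence obeys $x_k=M_{k,k-1}x_{k-1}+e^M_k$, $k\in[1,N]$, $x_0=e^M_0$, with $[e^M_k]$ zero-mean white Gaussian, $M_k=\mathrm{Cov}(e^M_k)$; two sequences share the same Markov model if $M_{k,k-1}$ and $M_k$, $k\in[1,N]$, coincide (equivalently their $C^{-1}$ have the same $A_1,\ldots,A_N,B_0,\ldots,B_{N-1}$). Reciprocal model with first-type boundary condition: $R^0_kx_k-R^-_kx_{k-1}-R^+_kx_{k+1}=e^R_k$ for $k\in[1,N-1]$, together with $R^0_0x_0-R^-_0x_N-R^+_0x_1=e^R_0$ and $R^0_Nx_N-R^-_Nx_{N-1}-R^+_Nx_0=e^R_N$, whose coefficients are given by $C^{-1}$: $R^0_k=A_k$ for $k\in[0,N]$, $R^+_k=(R^-_{k+1})'=-B_k$ for $k\in[0,N-1]$, $R^-_0=(R^+_N)'=-D_0$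 where $D_0$ is the $(0,N)$ block. Two sequences share the same reciprocal model if $R^0_k,R^-_k,R^+_k$ for $k\in[1,N-1]$ coincide (equivalently same $A_1,\ldots,A_{N-1},B_0,\ldots,B_{N-1}$). *)

theory Defs
  imports "HOL-Analysis.Analysis"
begin

text \<open>A zero-mean sequence x_0,...,x_N with x_k in R^d (d = CARD('d)) is represented
  by its second-order structure. Block matrices are functions nat => nat => real^'d^'d,
  block (j,k) being the (j,k) block; only indices j,k in [0,N] are meaningful.\<close>

definition blk_inv_of :: "nat \<Rightarrow> (nat \<Rightarrow> nat \<Rightarrow> real^'d^'d) \<Rightarrow> (nat \<Rightarrow> nat \<Rightarrow> real^'d^'d) \<Rightarrow> bool" where
  "blk_inv_of N C P \<longleftrightarrow>
     (\<forall>i\<le>N. \<forall>k\<le>N. (\<Sum>j\<le>N. C i j ** P j k) = (if i = k then mat 1 else 0)) \<and>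
     (\<forall>i\<le>N. \<forall>k\<le>N. (\<Sum>j\<le>N. P i j ** C j k) = (if i = k then mat 1 else 0))"

text \<open>The inverse C^{-1} of the (N+1)d x (N+1)d block matrix C (meaningful when C is nonsingular).\<close>
definition blk_inv :: "nat \<Rightarrow> (nat \<Rightarrow> nat \<Rightarrow> real^'d^'d) \<Rightarrow> (nat \<Rightarrow> nat \<Rightarrow> real^'d^'d)" where
  "blk_inv N C = (SOME P. blk_inv_of N C P)"

definition nonsingular_blk :: "nat \<Rightarrow> (nat \<Rightarrow> nat \<Rightarrow> real^'d^'d) \<Rightarrow> bool" where
  "nonsingular_blk N C \<longleftrightarrow> (\<exists>P. blk_inv_of N C P)"

definition cov_matrix :: "real^'d^'d \<Rightarrow> bool" where
  "cov_matrix S \<longleftrightarrow> transpose S = S \<and> (\<forall>v. 0 \<le> v \<bullet> (S *v v))"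

text \<open>State transition products: trans_prod Mt k j = M_{k,k-1} ... M_{j+1,j} for j < k,
  identity for k \<le> j.\<close>
fun trans_prod :: "(nat \<Rightarrow> real^'d^'d) \<Rightarrow> nat \<Rightarrow> nat \<Rightarrow> real^'d^'d" where
  "trans_prod Mt 0 j = mat 1"
| "trans_prod Mt (Suc k) j = (if Suc k \<le> j then mat 1 else Mt (Suc k) ** trans_prod Mt k j)"

text \<open>Covariance C of the sequence generated by the Markov model
  x_k = M_{k,k-1} x_{k-1} + e_k (k \<ge> 1), x_0 = e_0, with white noise Cov(e_k) = M_k:
  Cov(x_i, x_k) = sum_{j \<le> min i k} Phi(i,j) M_j Phi(k,j)'.
  Mt k = M_{k,k-1}, Mc k = M_k.\<close>
definition markov_cov :: "(nat \<Rightarrow> real^'d^'d) \<Rightarrow> (nat \<Rightarrow> real^'d^'d) \<Rightarrow> nat \<Rightarrow> nat \<Rightarrow> real^'d^'d" where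
  "markov_cov Mt Mc i k = (\<Sum>j\<le>min i k. trans_prod Mt i j ** Mc j ** transpose (trans_prod Mt k j))"

definition blkA :: "nat \<Rightarrow> (nat \<Rightarrow> nat \<Rightarrow> real^'d^'d) \<Rightarrow> nat \<Rightarrow> real^'d^'d" where
  "blkA N C k = blk_inv N C k k"
definition blkB :: "nat \<Rightarrow> (nat \<Rightarrow> nat \<Rightarrow> real^'d^'d) \<Rightarrow> nat \<Rightarrow> real^'d^'d" where
  "blkB N C k = blk_inv N C k (Suc k)"
definition blkD0 :: "nat \<Rightarrow> (nat \<Rightarrow> nat \<Rightarrow> real^'d^'d) \<Rightarrow> real^'d^'d" where
  "blkD0 N C = blk_inv N C 0 N"

text \<open>Coefficients of the reciprocal model with first-type boundary condition.\<close>
definition R0 :: "nat \<Rightarrow> (nat \<Rightarrow> nat \<Rightarrow> real^'d^'d) \<Rightarrow> nat \<Rightarrow> real^'d^'d" where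
  "R0 N C k = blkA N C k"
definition Rplus :: "nat \<Rightarrow> (nat \<Rightarrow> nat \<Rightarrow> real^'d^'d) \<Rightarrow> nat \<Rightarrow> real^'d^'d" where
  "Rplus N C k = (if k = N then transpose (- blkD0 N C) else - blkB N C k)"
definition Rminus :: "nat \<Rightarrow> (nat \<Rightarrow> nat \<Rightarrow> real^'d^'d) \<Rightarrow> nat \<Rightarrow> real^'d^'d" where
  "Rminus N C k = (if k = 0 then - blkD0 N C else transpose (Rplus N C (k - 1)))"

definition same_reciprocal_model :: "nat \<Rightarrow> (nat \<Rightarrow> nat \<Rightarrow> real^'d^'d) \<Rightarrow> (nat \<Rightarrow> nat \<Rightarrow> real^'d^'d) \<Rightarrow> bool" where
  "same_reciprocal_model N C1 C2 \<longleftrightarrow>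
     (\<forall>k\<in>{1..N-1}. R0 N C1 k = R0 N C2 k \<and> Rminus N C1 k = Rminus N C2 k \<and> Rplus N C1 k = Rplus N C2 k)"

definition same_markov_model :: "nat \<Rightarrow> (nat \<Rightarrow> real^'d^'d) \<Rightarrow> (nat \<Rightarrow> real^'d^'d) \<Rightarrow> (nat \<Rightarrow> real^'d^'d) \<Rightarrow> (nat \<Rightarrow> real^'d^'d) \<Rightarrow> bool" where
  "same_markov_model N Mt1 Mc1 Mt2 Mc2 \<longleftrightarrow> (\<forall>k\<in>{1..N}. Mt1 k = Mt2 k \<and> Mc1 k = Mc2 k)"

end

theory Submission
  imports Defs
begin

lemma mm_sum_right: "(sum f S) ** (B::'a::comm_ring_1^'n^'m) = (\<Sum>j\<in>S. f j ** B)"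
  by (induction S rule: infinite_finite_induct)
     (auto simp: vec_eq_iff matrix_matrix_mult_def sum.distrib distrib_right)

lemma mm_sum_left: "(A::'a::comm_ring_1^'n^'m) ** (sum f S) = (\<Sum>j\<in>S. A ** f j)"
  by (induction S rule: infinite_finite_induct)
     (auto simp: vec_eq_iff matrix_matrix_mult_def sum.distrib distrib_left)

lemma mm_neg_left: "(- A) ** (B::'a::comm_ring_1^'n^'m) = - (A ** B)"
  by (auto simp: vec_eq_iff matrix_matrix_mult_def sum_negf)

lemma mm_neg_right: "(A::'a::comm_ring_1^'n^'m) ** (- B) = - (A ** B)"
  by (auto simp: vec_eq_iff matrix_matrix_mult_def sum_negf)

lemma mm_add_right: "(A + B) ** (C::'a::comm_ring_1^'n^'m) = A ** C + B ** C"
  by (auto simp: vec_eq_iff matrix_matrix_mult_def sum.distrib distrib_right)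

lemma transpose_neg: "transpose (- A) = - transpose (A::'a::comm_ring_1^'n^'m)"
  by (auto simp: vec_eq_iff transpose_def)

lemma transpose_zero: "transpose (0::'a::comm_ring_1^'n^'m) = 0"
  by (auto simp: vec_eq_iff transpose_def)

lemma transpose_sum: "transpose (sum f S) = (\<Sum>j\<in>S. transpose (f j :: 'a::comm_ring_1^'n^'m))"
  by (induction S rule: infinite_finite_induct)
     (auto simp: vec_eq_iff transpose_def)

type_synonym 'd bm = "nat \<Rightarrow> nat \<Rightarrow> real^('d::finite)^'d"

definition bmul :: "nat \<Rightarrow> ('d::finite) bm \<Rightarrow> 'd bm \<Rightarrow> 'd bm" where
  "bmul N X Y i k = (\<Sum>j\<le>N. X i j ** Y j k)"
definition bT :: "('d::finite) bm \<Rightarrow> 'd bm" where "bT X i k = transpose (X k i)"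
definition bId :: "('d::finite) bm" where "bId i k = (if i = k then mat 1 else 0)"
definition bdiag :: "(nat \<Rightarrow> real^('d::finite)^'d) \<Rightarrow> 'd bm" where "bdiag F i k = (if i = k then F i else 0)"
definition eqN :: "nat \<Rightarrow> ('d::finite) bm \<Rightarrow> 'd bm \<Rightarrow> bool" where
  "eqN N X Y \<longleftrightarrow> (\<forall>i\<le>N. \<forall>k\<le>N. X i k = Y i k)"

lemma eqN_trans[trans]: "eqN N X Y \<Longrightarrow> eqN N Y Z \<Longrightarrow> eqN N X Z"
  by (simp add: eqN_def)
lemma eqN_sym: "eqN N X Y \<Longrightarrow> eqN N Y X"
  by (simp add: eqN_def)
lemma eqN_refl: "eqN N X X"
  by (simp add: eqN_def)

lemma bmul_assoc: "bmul N (bmul N X Y) Z = bmul N X (bmul N Y Z)"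
proof (intro ext)
  fix i k
  have "bmul N (bmul N X Y) Z i k = (\<Sum>j\<le>N. \<Sum>a\<le>N. X i a ** Y a j ** Z j k)"
    by (simp add: bmul_def mm_sum_right)
  also have "\<dots> = (\<Sum>a\<le>N. \<Sum>j\<le>N. X i a ** Y a j ** Z j k)"
    by (rule sum.swap)
  also have "\<dots> = bmul N X (bmul N Y Z) i k"
    by (simp add: bmul_def mm_sum_left matrix_mul_assoc)
  finally show "bmul N (bmul N X Y) Z i k = bmul N X (bmul N Y Z) i k" .
qed

lemma bT_bmul: "bT (bmul N X Y) = bmul N (bT Y) (bT X)"
  by (intro ext) (simp add: bT_def bmul_def transpose_sum matrix_transpose_mul)

lemma bT_bT[simp]: "bT (bT X) = X"
  by (intro ext) (simp add: bT_def)

lemma bT_bId[simp]: "bT bId = bId"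
  by (intro ext) (simp add: bT_def bId_def transpose_zero)

lemma eqN_bT: "eqN N X Y \<Longrightarrow> eqN N (bT X) (bT Y)"
  by (simp add: eqN_def bT_def)

lemma bmul_congL: "eqN N X X' \<Longrightarrow> eqN N (bmul N X Y) (bmul N X' Y)"
  by (simp add: eqN_def bmul_def)
lemma bmul_congR: "eqN N Y Y' \<Longrightarrow> eqN N (bmul N X Y) (bmul N X Y')"
  by (simp add: eqN_def bmul_def)

lemma bmul_idL: "eqN N (bmul N bId Y) Y"
  by (simp add: eqN_def bmul_def bId_def if_distrib if_distribR cong: if_cong)
lemma bmul_idR: "eqN N (bmul N Y bId) Y"
  by (simp add: eqN_def bmul_def bId_def if_distrib if_distribR cong: if_cong)

lemma bmul_eq_idL: "eqN N X bId \<Longrightarrow> eqN N (bmul N X Y) Y"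
  using bmul_congL bmul_idL eqN_trans by blast
lemma bmul_eq_idR: "eqN N X bId \<Longrightarrow> eqN N (bmul N Y X) Y"
  using bmul_congR bmul_idR eqN_trans by blast

lemma bmul_diagL: "i \<le> N \<Longrightarrow> bmul N (bdiag F) Y i k = F i ** Y i k"
  by (simp add: bmul_def bdiag_def if_distrib if_distribR cong: if_cong)

lemma bmul_diag_mid: "bmul N (bmul N X (bdiag F)) Y i k = (\<Sum>a\<le>N. X i a ** F a ** Y a k)"
  by (simp add: bmul_def bdiag_def if_distrib if_distribR cong: if_cong)

definition Lm :: "(nat \<Rightarrow> real^('d::finite)^'d) \<Rightarrow> 'd bm" where
  "Lm Mt i j = (if j \<le> i then trans_prod Mt i j else 0)"
definition Li :: "(nat \<Rightarrow> real^('d::finite)^'d) \<Rightarrow> 'd bm" where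
  "Li Mt i j = (if i = j then mat 1 else if i = Suc j then - Mt i else 0)"

lemma trans_prod_id: "k \<le> j \<Longrightarrow> trans_prod Mt k j = mat 1"
  by (cases k) auto

lemma trans_prod_Suc: "\<not> Suc k \<le> j \<Longrightarrow> trans_prod Mt (Suc k) j = Mt (Suc k) ** trans_prod Mt k j"
  by simp

lemma trans_prod_right: "k < i \<Longrightarrow> trans_prod Mt i k = trans_prod Mt i (Suc k) ** Mt (Suc k)"
proof (induction i)
  case 0 then show ?case by simp
next
  case (Suc m)
  show ?case
  proof (cases "k = m")
    case True then show ?thesis by (simp add: trans_prod_id)
  next
    case False
    then have "k < m" using Suc.prems by simp
    then show ?thesis using Suc.IH by (simp add: matrix_mul_assoc)
  qed
qed

lemma F1: assumes "i \<le> N" "k \<le> N" shows "bmul N (Li Mt) (Lm Mt) i k = bId i k"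
proof (cases i)
  case 0
  have "bmul N (Li Mt) (Lm Mt) i k = (\<Sum>j\<in>{0}. Li Mt i j ** Lm Mt j k)"
    unfolding bmul_def by (rule sum.mono_neutral_right) (auto simp: Li_def 0)
  then show ?thesis by (simp add: 0 Li_def Lm_def bId_def)
next
  case (Suc m)
  have "bmul N (Li Mt) (Lm Mt) i k = (\<Sum>j\<in>{m, Suc m}. Li Mt i j ** Lm Mt j k)"
    unfolding bmul_def by (rule sum.mono_neutral_right) (use assms in \<open>auto simp: Li_def Suc\<close>)
  also have "\<dots> = Lm Mt (Suc m) k - Mt (Suc m) ** Lm Mt m k"
    by (simp add: Li_def Suc mm_neg_left)
  also have "\<dots> = bId i k"
    by (cases "k \<le> m"; cases "k = Suc m") (auto simp: Lm_def bId_def Suc trans_prod_id)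
  finally show ?thesis .
qed

lemma F2: assumes "i \<le> N" "k \<le> N" shows "bmul N (Lm Mt) (Li Mt) i k = bId i k"
proof (cases "k = N")
  case True
  have "bmul N (Lm Mt) (Li Mt) i k = (\<Sum>j\<in>{k}. Lm Mt i j ** Li Mt j k)"
    unfolding bmul_def by (rule sum.mono_neutral_right) (use assms True in \<open>auto simp: Li_def\<close>)
  then show ?thesis using assms True by (simp add: Li_def Lm_def bId_def trans_prod_id)
next
  case False
  have "bmul N (Lm Mt) (Li Mt) i k = (\<Sum>j\<in>{k, Suc k}. Lm Mt i j ** Li Mt j k)"
    unfolding bmul_def by (rule sum.mono_neutral_right) (use assms False in \<open>auto simp: Li_def\<close>)
  also have "\<dots> = Lm Mt i k - Lm Mt i (Suc k) ** Mt (Suc k)"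
    by (simp add: Li_def mm_neg_right)
  also have "\<dots> = bId i k"
    by (cases "k < i"; cases "k = i") (auto simp: Lm_def bId_def trans_prod_id trans_prod_right[of k i])
  finally show ?thesis .
qed

lemma F3: assumes "i \<le> N" "k \<le> N"
  shows "markov_cov Mt Mc i k = bmul N (bmul N (Lm Mt) (bdiag Mc)) (bT (Lm Mt)) i k"
proof -
  have "bmul N (bmul N (Lm Mt) (bdiag Mc)) (bT (Lm Mt)) i k
      = (\<Sum>j\<le>N. Lm Mt i j ** Mc j ** transpose (Lm Mt k j))"
    by (simp add: bmul_diag_mid bmul_def bdiag_def bT_def if_distrib if_distribR cong: if_cong)
  also have "\<dots> = (\<Sum>j\<le>min i k. Lm Mt i j ** Mc j ** transpose (Lm Mt k j))"
    by (rule sum.mono_neutral_right) (use assms in \<open>auto simp: Lm_def transpose_zero\<close>)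
  also have "\<dots> = markov_cov Mt Mc i k"
    unfolding markov_cov_def by (rule sum.cong) (auto simp: Lm_def)
  finally show ?thesis by simp
qed

lemma cancelL: "eqN N (bmul N X Y) bId \<Longrightarrow> eqN N (bmul N X (bmul N Y Z)) Z"
  by (metis bmul_assoc bmul_eq_idL)

lemma explicit_inv:
  fixes Mt Mc :: "nat \<Rightarrow> real^('d::finite)^'d"
  assumes ns: "nonsingular_blk N (markov_cov Mt Mc)"
  obtains W where "\<forall>k\<le>N. Mc k ** W k = mat 1 \<and> W k ** Mc k = mat 1"
    "blk_inv N (markov_cov Mt Mc) N N = W N"
    "\<forall>k<N. blk_inv N (markov_cov Mt Mc) k (Suc k) = - (transpose (Mt (Suc k)) ** W (Suc k))"
    "\<forall>k<N. blk_inv N (markov_cov Mt Mc) k k = W k + transpose (Mt (Suc k)) ** W (Suc k) ** Mt (Suc k)"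
proof -
  define C where "C = markov_cov Mt Mc"
  define P where "P = blk_inv N C"
  define L where "L = Lm Mt"
  define K where "K = Li Mt"
  define Dg where "Dg = bdiag Mc"
  have hP: "blk_inv_of N C P"
    using ns unfolding P_def blk_inv_def nonsingular_blk_def C_def by (rule someI_ex)
  have CP: "eqN N (bmul N C P) bId" and PC: "eqN N (bmul N P C) bId"
    using hP by (auto simp: blk_inv_of_def eqN_def bmul_def bId_def)
  have CC: "eqN N C (bmul N (bmul N L Dg) (bT L))"
    using F3 by (auto simp: eqN_def C_def L_def Dg_def)
  have E1: "eqN N (bmul N K L) bId" using F1 by (auto simp: eqN_def K_def L_def)
  have E2: "eqN N (bmul N L K) bId" using F2 by (auto simp: eqN_def K_def L_def)
  have E1T: "eqN N (bmul N (bT L) (bT K)) bId"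
    using eqN_bT[OF E1] by (simp add: bT_bmul)
  have E2T: "eqN N (bmul N (bT K) (bT L)) bId"
    using eqN_bT[OF E2] by (simp add: bT_bmul)
  define W where "W = bmul N (bmul N (bT L) P) L"
  have D1: "eqN N Dg (bmul N (bmul N K C) (bT K))"
  proof -
    have "eqN N (bmul N (bmul N K C) (bT K)) (bmul N (bmul N K (bmul N (bmul N L Dg) (bT L))) (bT K))"
      by (rule bmul_congL[OF bmul_congR[OF CC]])
    also have "bmul N (bmul N K (bmul N (bmul N L Dg) (bT L))) (bT K)
       = bmul N K (bmul N L (bmul N Dg (bmul N (bT L) (bT K))))"
      by (simp add: bmul_assoc)
    also have "eqN N \<dots> (bmul N K (bmul N L Dg))"
      by (rule bmul_congR[OF bmul_congR[OF bmul_eq_idR[OF E1T]]])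
    also have "eqN N \<dots> Dg"
      by (rule cancelL[OF E1])
    finally show ?thesis by (rule eqN_sym)
  qed
  have DW: "eqN N (bmul N Dg W) bId"
  proof -
    have "eqN N (bmul N Dg W) (bmul N (bmul N (bmul N K C) (bT K)) W)"
      by (rule bmul_congL[OF D1])
    also have "bmul N (bmul N (bmul N K C) (bT K)) W = bmul N K (bmul N C (bmul N (bT K) (bmul N (bT L) (bmul N P L))))"
      by (simp add: W_def bmul_assoc)
    also have "eqN N \<dots> (bmul N K (bmul N C (bmul N P L)))"
      by (rule bmul_congR[OF bmul_congR[OF cancelL[OF E2T]]])
    also have "eqN N \<dots> (bmul N K L)"
      by (rule bmul_congR[OF cancelL[OF CP]])
    also have "eqN N \<dots> bId" by (rule E1)
    finally show ?thesis .
  qed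
  have PW: "eqN N P (bmul N (bmul N (bT K) W) K)"
  proof -
    have e: "bmul N (bmul N (bT K) W) K = bmul N (bT K) (bmul N (bT L) (bmul N P (bmul N L K)))"
      by (simp add: W_def bmul_assoc)
    have a: "eqN N (bmul N (bT K) (bmul N (bT L) (bmul N P (bmul N L K)))) (bmul N (bT K) (bmul N (bT L) P))"
      by (rule bmul_congR[OF bmul_congR[OF bmul_eq_idR[OF E2]]])
    have b: "eqN N (bmul N (bT K) (bmul N (bT L) P)) P"
      by (rule cancelL[OF E2T])
    show ?thesis unfolding e by (rule eqN_sym[OF eqN_trans[OF a b]])
  qed
  define Wd where "Wd a = W a a" for a
  have MW: "Mc i ** W i k = bId i k" if "i \<le> N" "k \<le> N" for i k
    using DW that by (auto simp: eqN_def Dg_def bmul_diagL)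
  have inv: "Mc k ** Wd k = mat 1 \<and> Wd k ** Mc k = mat 1" if "k \<le> N" for k
  proof -
    have "Mc k ** Wd k = mat 1" using MW[OF that that] by (simp add: Wd_def bId_def)
    then show ?thesis using matrix_left_right_inverse1 by blast
  qed
  have Wdiag: "eqN N W (bdiag Wd)"
  proof -
    have "W i k = 0" if "i \<le> N" "k \<le> N" "i \<noteq> k" for i k
    proof -
      have "W i k = (Wd i ** Mc i) ** W i k" using inv[OF that(1)] by simp
      also have "\<dots> = Wd i ** (Mc i ** W i k)" by (simp add: matrix_mul_assoc)
      also have "\<dots> = 0" using MW[OF that(1,2)] that(3) by (simp add: bId_def)
      finally show ?thesis .
    qed
    then show ?thesis by (auto simp: eqN_def bdiag_def Wd_def)
  qed
  have PE: "P i k = (\<Sum>a\<le>N. transpose (K a i) ** Wd a ** K a k)" if "i \<le> N" "k \<le> N" for i k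
  proof -
    have "eqN N P (bmul N (bmul N (bT K) (bdiag Wd)) K)"
      by (rule eqN_trans[OF PW bmul_congL[OF bmul_congR[OF Wdiag]]])
    then show ?thesis using that by (simp add: eqN_def bmul_diag_mid bT_def)
  qed
  have R1: "P N N = Wd N"
  proof -
    have "P N N = (\<Sum>a\<in>{N}. transpose (K a N) ** Wd a ** K a N)"
      unfolding PE[OF order_refl order_refl]
      by (rule sum.mono_neutral_right) (auto simp: K_def Li_def transpose_zero)
    then show ?thesis by (simp add: K_def Li_def)
  qed
  have R2: "P k (Suc k) = - (transpose (Mt (Suc k)) ** Wd (Suc k))" if "k < N" for k
  proof -
    have "P k (Suc k) = (\<Sum>a\<in>{Suc k}. transpose (K a k) ** Wd a ** K a (Suc k))"
      unfolding PE[of k "Suc k", OF less_imp_le[OF that] Suc_leI[OF that]] using that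
      by (intro sum.mono_neutral_right) (auto simp: K_def Li_def transpose_zero)
    then show ?thesis by (simp add: K_def Li_def transpose_neg mm_neg_left)
  qed
  have R3: "P k k = Wd k + transpose (Mt (Suc k)) ** Wd (Suc k) ** Mt (Suc k)" if "k < N" for k
  proof -
    have "P k k = (\<Sum>a\<in>{k, Suc k}. transpose (K a k) ** Wd a ** K a k)"
      unfolding PE[of k k, OF less_imp_le[OF that] less_imp_le[OF that]] using that
      by (intro sum.mono_neutral_right) (auto simp: K_def Li_def transpose_zero)
    then show ?thesis by (simp add: K_def Li_def transpose_neg mm_neg_left mm_neg_right)
  qed
  show ?thesis
    apply (rule that[of Wd])
    using inv R1 R2 R3 by (auto simp: P_def C_def)
qed

lemma inv_uniq:
  fixes A B B' :: "real^('d::finite)^'d"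
  assumes "B ** A = mat 1" "A ** B' = mat 1"
  shows "B = B'"
proof -
  have "B = B ** (A ** B')" using assms by simp
  also have "\<dots> = (B ** A) ** B'" by (simp add: matrix_mul_assoc)
  finally show ?thesis using assms by simp
qed

lemma transpose_inj: "transpose (A::real^('d::finite)^'d) = transpose B \<Longrightarrow> A = B"
  by (metis transpose_transpose)

theorem proposition6:
  fixes N :: nat
    and Mt1 Mc1 Mt2 Mc2 :: "nat \<Rightarrow> real^'d^'d"
  assumes "N \<ge> 2"
    and "\<forall>k\<le>N. cov_matrix (Mc1 k)"
    and "\<forall>k\<le>N. cov_matrix (Mc2 k)"
    and "nonsingular_blk N (markov_cov Mt1 Mc1)"
    and "nonsingular_blk N (markov_cov Mt2 Mc2)"
    and "same_reciprocal_model N (markov_cov Mt1 Mc1) (markov_cov Mt2 Mc2)"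
  shows "(same_markov_model N Mt1 Mc1 Mt2 Mc2
            \<longleftrightarrow> R0 N (markov_cov Mt1 Mc1) N = R0 N (markov_cov Mt2 Mc2) N)
       \<and> (same_markov_model N Mt1 Mc1 Mt2 Mc2 \<longleftrightarrow> Mc1 N = Mc2 N)"
proof -
  define P1 where "P1 = blk_inv N (markov_cov Mt1 Mc1)"
  define P2 where "P2 = blk_inv N (markov_cov Mt2 Mc2)"
  obtain W1 where W1: "\<forall>k\<le>N. Mc1 k ** W1 k = mat 1 \<and> W1 k ** Mc1 k = mat 1"
    "P1 N N = W1 N"
    "\<forall>k<N. P1 k (Suc k) = - (transpose (Mt1 (Suc k)) ** W1 (Suc k))"
    "\<forall>k<N. P1 k k = W1 k + transpose (Mt1 (Suc k)) ** W1 (Suc k) ** Mt1 (Suc k)"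
    using explicit_inv[OF assms(4)] unfolding P1_def by blast
  obtain W2 where W2: "\<forall>k\<le>N. Mc2 k ** W2 k = mat 1 \<and> W2 k ** Mc2 k = mat 1"
    "P2 N N = W2 N"
    "\<forall>k<N. P2 k (Suc k) = - (transpose (Mt2 (Suc k)) ** W2 (Suc k))"
    "\<forall>k<N. P2 k k = W2 k + transpose (Mt2 (Suc k)) ** W2 (Suc k) ** Mt2 (Suc k)"
    using explicit_inv[OF assms(5)] unfolding P2_def by blast
  have rec: "P1 k k = P2 k k \<and> P1 (k-1) k = P2 (k-1) k \<and> P1 k (Suc k) = P2 k (Suc k)"
    if "1 \<le> k" "k \<le> N - 1" for k
  proof -
    have e: "R0 N (markov_cov Mt1 Mc1) k = R0 N (markov_cov Mt2 Mc2) k"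
      "Rminus N (markov_cov Mt1 Mc1) k = Rminus N (markov_cov Mt2 Mc2) k"
      "Rplus N (markov_cov Mt1 Mc1) k = Rplus N (markov_cov Mt2 Mc2) k"
      using assms(6) that unfolding same_reciprocal_model_def by auto
    have n: "k \<noteq> N" "k - 1 \<noteq> N" "k \<noteq> 0" "Suc (k - 1) = k" using that assms(1) by auto
    have "transpose (- P1 (k-1) k) = transpose (- P2 (k-1) k)"
      using e(2) n by (simp add: Rminus_def Rplus_def blkB_def P1_def P2_def)
    then have 2: "P1 (k-1) k = P2 (k-1) k" by (metis transpose_inj neg_equal_iff_equal)
    have 3: "P1 k (Suc k) = P2 k (Suc k)"
      using e(3) n by (simp add: Rplus_def blkB_def P1_def P2_def)
    have 1: "P1 k k = P2 k k" using e(1) by (simp add: R0_def blkA_def P1_def P2_def)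
    show ?thesis using 1 2 3 by simp
  qed
  have hB: "P1 k (Suc k) = P2 k (Suc k)" if "k < N" for k
  proof (cases k)
    case 0
    then show ?thesis using rec[of 1] assms(1) by simp
  next
    case (Suc m)
    then show ?thesis using rec[of k] that by simp
  qed
  have hA: "P1 k k = P2 k k" if "1 \<le> k" "k < N" for k
    using rec[of k] that by simp
  have B': "transpose (Mt1 (Suc k)) ** W1 (Suc k) = transpose (Mt2 (Suc k)) ** W2 (Suc k)" if "k < N" for k
    using hB[OF that] W1(3) W2(3) that by auto
  have A': "W1 k + transpose (Mt1 (Suc k)) ** W1 (Suc k) ** Mt1 (Suc k)
      = W2 k + transpose (Mt2 (Suc k)) ** W2 (Suc k) ** Mt2 (Suc k)" if "1 \<le> k" "k < N" for k
    using hA[OF that] W1(4) W2(4) that by auto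
  have WMc: "W1 k = W2 k \<longleftrightarrow> Mc1 k = Mc2 k" if "k \<le> N" for k
  proof
    assume "W1 k = W2 k"
    then show "Mc1 k = Mc2 k" using inv_uniq[of "Mc1 k" "W1 k" "Mc2 k"] W1(1) W2(1) that by auto
  next
    assume "Mc1 k = Mc2 k"
    then show "W1 k = W2 k" using inv_uniq[of "W1 k" "Mc1 k" "W2 k"] W1(1) W2(1) that by auto
  qed
  have MtE: "Mt1 (Suc k) = Mt2 (Suc k)" if "k < N" "W1 (Suc k) = W2 (Suc k)" for k
  proof -
    have "transpose (Mt1 (Suc k)) = transpose (Mt1 (Suc k)) ** W1 (Suc k) ** Mc1 (Suc k)"
      using W1(1) that(1) by (simp add: matrix_mul_assoc[symmetric] Suc_leI)
    also have "\<dots> = transpose (Mt2 (Suc k)) ** W2 (Suc k) ** Mc2 (Suc k)"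
      using B'[OF that(1)] WMc[of "Suc k"] that by simp
    also have "\<dots> = transpose (Mt2 (Suc k))"
      using W2(1) that(1) by (simp add: matrix_mul_assoc[symmetric] Suc_leI)
    finally show ?thesis by (rule transpose_inj)
  qed
  have down: "W1 (N - j) = W2 (N - j)" if "W1 N = W2 N" "j < N" for j
    using that(2)
  proof (induction j)
    case 0 then show ?case using that(1) by simp
  next
    case (Suc j)
    define k where "k = N - Suc j"
    have k: "1 \<le> k" "k < N" "Suc k = N - j" using Suc.prems by (auto simp: k_def)
    have w: "W1 (Suc k) = W2 (Suc k)" using Suc k by simp
    have "Mt1 (Suc k) = Mt2 (Suc k)" using MtE[OF k(2) w] .
    then have "W1 k = W2 k" using A'[OF k(1,2)] w by simp
    then show ?case by (simp add: k_def)
  qed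
  have main: "same_markov_model N Mt1 Mc1 Mt2 Mc2" if "Mc1 N = Mc2 N"
  proof -
    have WN: "W1 N = W2 N" using WMc[of N] that by simp
    have Wk: "W1 k = W2 k" if "1 \<le> k" "k \<le> N" for k
      using down[OF WN, of "N - k"] that by simp
    show ?thesis unfolding same_markov_model_def
    proof
      fix k assume "k \<in> {1..N}"
      then have k: "1 \<le> k" "k \<le> N" by auto
      then obtain m where m: "k = Suc m" "m < N" by (cases k) auto
      show "Mt1 k = Mt2 k \<and> Mc1 k = Mc2 k"
        using MtE[OF m(2)] Wk[OF k] WMc[OF k(2)] m(1) by simp
    qed
  qed
  have conv: "same_markov_model N Mt1 Mc1 Mt2 Mc2 \<Longrightarrow> Mc1 N = Mc2 N"
    using assms(1) by (auto simp: same_markov_model_def)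
  have R0N: "R0 N (markov_cov Mt1 Mc1) N = R0 N (markov_cov Mt2 Mc2) N \<longleftrightarrow> Mc1 N = Mc2 N"
    using W1(2) W2(2) WMc[of N] by (simp add: R0_def blkA_def P1_def P2_def)
  show ?thesis using main conv R0N by blast
qed

end
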